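(* In the standing setting below, for every $(S_1,S_2)\in\Sigma(\Lambda_1,\Lambda_2)$ the function $G_1S_1$ belongs to $\mathcal{P}W_\pi+z\mathcal{P}W_\pi$.
   Context: $\mathcal{P}W_\pi$ is the Paley–Wiener space of entire functions of exponential type at most $\pi$ square integrable on $\mathbb R$; $K_\lambda(z)=\frac{\sin\pi(z-\bar\lambda)}{\pi(z-\bar\lambda)}$ is its reproducing kernel; $F^*(z)=\overline{F(\bar z)}$. Standing setting: $\Lambda\subset\mathbb C$ with $\Lambda\cap\mathbb Z=\emptyset$ is such that $\{K_\lambda\}_{\lambda\in\Lambda}$ is exact (complete and minimal) in $\mathcal PW_\pi$, and $G$ is its generating function (entire of exponential type $\pi$, simple zeros exactly at $\Lambda$, with biorthogonal system $g_\lambda=\frac{G(z)}{G'(\lambda)(z-\lambda)}$). $\Lambda=\Lambda_1\cup\Lambda_2$ is a partition into two disjoint infinite sets. $G_2$ is an entire function of genus at most 1 with simple zeros exactly at $\Lambda_2$, normalized (by an exponential factor $e^{\gamma z}$) so that $G_2^*/G_2$ restricted to $\mathbb C_+$ is a quotient of two Blaschke products, and $G_1=G/G_2$. $\Sigma(\Lambda_1,\Lambda_2)$ is the set of pairs $(S_1,S_2)$ of entire functions for which there exists $(a_n)_{n\in\mathbb Z}\in\ell^2$ with $a_n\ne0$ for all $n$ such that $$\sum_{n\in\mathbb Z}\frac{a_nG(n)}{z-n}=\frac{G_1(z)S_1(z)}{\sin\pi z},\qquad \sum_{n\in\mathbb Z}\frac{\overline{a_n}(-1)^n}{z-n}=\frac{G_2(z)S_2(z)}{\sin\pi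 z}.$$ (Such pairs correspond to the functions $h=G_2S_2=\sum_n\overline{a_n}K_n$ orthogonal to $\{g_\lambda\}_{\lambda\in\Lambda_1}\cup\{K_\lambda\}_{\lambda\in\Lambda_2}$.) *)

theory Defs
  imports "HOL-Analysis.Analysis"
begin

definition entire :: "(complex \<Rightarrow> complex) \<Rightarrow> bool" where
  "entire f \<longleftrightarrow> f holomorphic_on UNIV"

definition exp_type_le :: "real \<Rightarrow> (complex \<Rightarrow> complex) \<Rightarrow> bool" where
  "exp_type_le \<tau> f \<longleftrightarrow>
     (\<forall>\<epsilon>>0. \<exists>C. \<forall>z. norm (f z) \<le> C * exp ((\<tau> + \<epsilon>) * norm z))"

definition exp_type_eq :: "real \<Rightarrow> (complex \<Rightarrow> complex) \<Rightarrow> bool" where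
  "exp_type_eq \<tau> f \<longleftrightarrow> exp_type_le \<tau> f \<and> (\<forall>\<sigma><\<tau>. \<not> exp_type_le \<sigma> f)"

definition PW :: "(complex \<Rightarrow> complex) set" where
  "PW = {f. entire f \<and> exp_type_le pi f \<and>
            integrable lborel (\<lambda>x::real. (norm (f (complex_of_real x)))\<^sup>2)}"

definition pw_inner :: "(complex \<Rightarrow> complex) \<Rightarrow> (complex \<Rightarrow> complex) \<Rightarrow> complex" where
  "pw_inner f g = integral\<^sup>L lborel (\<lambda>x::real. f (complex_of_real x) * cnj (g (complex_of_real x)))"

definition pw_norm :: "(complex \<Rightarrow> complex) \<Rightarrow> real" where
  "pw_norm f = sqrt (integral\<^sup>L lborel (\<lambda>x::real. (norm (f (complex_of_real x)))\<^sup>2))"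

definition PW_plus_zPW :: "(complex \<Rightarrow> complex) set" where
  "PW_plus_zPW = {f. \<exists>u v. u \<in> PW \<and> v \<in> PW \<and> (\<forall>z. f z = u z + z * v z)}"

definition sinc_c :: "complex \<Rightarrow> complex" where
  "sinc_c w = (if w = 0 then 1 else sin w / w)"

definition Kern :: "complex \<Rightarrow> complex \<Rightarrow> complex" where
  "Kern lam z = sinc_c (complex_of_real pi * (z - cnj lam))"

definition in_closed_span :: "complex set \<Rightarrow> (complex \<Rightarrow> complex) \<Rightarrow> bool" where
  "in_closed_span S f \<longleftrightarrow>
     (\<forall>\<epsilon>>0. \<exists>F c. finite F \<and> F \<subseteq> S \<and>
        pw_norm (\<lambda>z. f z - (\<Sum>\<mu>\<in>F. c \<mu> * Kern \<mu> z)) < \<epsilon>)"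

definition kernels_complete :: "complex set \<Rightarrow> bool" where
  "kernels_complete \<Lambda> \<longleftrightarrow> (\<forall>f\<in>PW. in_closed_span \<Lambda> f)"

definition kernels_minimal :: "complex set \<Rightarrow> bool" where
  "kernels_minimal \<Lambda> \<longleftrightarrow> (\<forall>l\<in>\<Lambda>. \<not> in_closed_span (\<Lambda> - {l}) (Kern l))"

definition kernels_exact :: "complex set \<Rightarrow> bool" where
  "kernels_exact \<Lambda> \<longleftrightarrow> kernels_complete \<Lambda> \<and> kernels_minimal \<Lambda>"

definition biorth :: "(complex \<Rightarrow> complex) \<Rightarrow> complex \<Rightarrow> complex \<Rightarrow> complex" where
  "biorth G l z = (if z = l then 1 else G z / (deriv G l * (z - l)))"

definition simple_zeros_exactly :: "(complex \<Rightarrow> complex) \<Rightarrow> complex set \<Rightarrow> bool" where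
  "simple_zeros_exactly G Z \<longleftrightarrow> {z. G z = 0} = Z \<and> (\<forall>z\<in>Z. deriv G z \<noteq> 0)"

definition generating_function :: "complex set \<Rightarrow> (complex \<Rightarrow> complex) \<Rightarrow> bool" where
  "generating_function \<Lambda> G \<longleftrightarrow>
     entire G \<and> exp_type_eq pi G \<and> simple_zeros_exactly G \<Lambda> \<and>
     (\<forall>l\<in>\<Lambda>. biorth G l \<in> PW) \<and>
     (\<forall>l\<in>\<Lambda>. \<forall>\<mu>\<in>\<Lambda>. pw_inner (biorth G l) (Kern \<mu>) = (if l = \<mu> then 1 else 0))"

text \<open>Entire function of genus at most 1 (zeros not at the origin):
  f(z) = exp(a + b z) * prod_n (1 - z/z_n) exp(z/z_n), sum |z_n|^(-2) < infinity,
  where z_n enumerates the zero set Z.\<close>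
definition genus_le_1 :: "(complex \<Rightarrow> complex) \<Rightarrow> complex set \<Rightarrow> bool" where
  "genus_le_1 f Z \<longleftrightarrow>
     (\<exists>a b (e :: nat \<Rightarrow> complex). bij_betw e UNIV Z \<and>
        summable (\<lambda>n. 1 / (norm (e n))\<^sup>2) \<and>
        (\<forall>z. (\<lambda>n. (1 - z / e n) * exp (z / e n)) has_prod (f z / exp (a + b * z))))"

definition blaschke_factor :: "complex \<Rightarrow> complex \<Rightarrow> complex" where
  "blaschke_factor w z = (z - w) / (z - cnj w)"

text \<open>Blaschke product in the upper half-plane (finite or infinite, with unimodular
  convergence factors / constant).\<close>
definition blaschke_product :: "(complex \<Rightarrow> complex) \<Rightarrow> bool" where
  "blaschke_product B \<longleftrightarrow>
     (\<exists>(w :: nat \<Rightarrow> complex) (\<epsilon> :: nat \<Rightarrow> complex) (N :: nat set).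
        (\<forall>n. norm (\<epsilon> n) = 1) \<and> (\<forall>n\<in>N. Im (w n) > 0) \<and>
        (\<forall>z. Im z > 0 \<longrightarrow>
           (\<lambda>n. \<epsilon> n * (if n \<in> N then blaschke_factor (w n) z else 1)) has_prod B z))"

definition star_fun :: "(complex \<Rightarrow> complex) \<Rightarrow> complex \<Rightarrow> complex" where
  "star_fun G z = cnj (G (cnj z))"

definition star_quot_blaschke :: "(complex \<Rightarrow> complex) \<Rightarrow> bool" where
  "star_quot_blaschke G \<longleftrightarrow>
     (\<exists>B1 B2. blaschke_product B1 \<and> blaschke_product B2 \<and>
        (\<forall>z. Im z > 0 \<and> G z \<noteq> 0 \<and> B2 z \<noteq> 0 \<longrightarrow> star_fun G z / G z = B1 z / B2 z))"

definition Sigma_pairs ::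
  "(complex \<Rightarrow> complex) \<Rightarrow> (complex \<Rightarrow> complex) \<Rightarrow> (complex \<Rightarrow> complex) \<Rightarrow>
   ((complex \<Rightarrow> complex) \<times> (complex \<Rightarrow> complex)) set" where
  "Sigma_pairs G G1 G2 = {(S1, S2). entire S1 \<and> entire S2 \<and>
     (\<exists>a :: int \<Rightarrow> complex.
        (\<lambda>n. (norm (a n))\<^sup>2) summable_on UNIV \<and> (\<forall>n. a n \<noteq> 0) \<and>
        (\<forall>z. z \<notin> \<int> \<longrightarrow>
           ((\<lambda>n. a n * G (of_int n) / (z - of_int n)) has_sum
              (G1 z * S1 z / sin (complex_of_real pi * z))) UNIV) \<and>
        (\<forall>z. z \<notin> \<int> \<longrightarrow>
           ((\<lambda>n. cnj (a n) * (-1) ^ nat \<bar>n\<bar> / (z - of_int n)) has_sum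
              (G2 z * S2 z / sin (complex_of_real pi * z))) UNIV))}"

end

theory Submission
  imports Defs "HOL-Probability.Sinc_Integral" "HOL-Library.Nat_Bijection"
begin


definition ssin :: "complex \<Rightarrow> complex" where
  "ssin z = (\<Sum>n. of_real (sin_coeff (Suc n)) * z^n)"

lemma ssin_sums_sin: fixes z :: complex shows "(\<lambda>n. of_real (sin_coeff (Suc n)) * z^(Suc n)) sums sin z"
proof -
  have "(\<lambda>n. sin_coeff n *\<^sub>R z^n) sums sin z" by (rule sin_converges)
  then have "(\<lambda>n. sin_coeff (Suc n) *\<^sub>R z^(Suc n)) sums (sin z - sin_coeff 0 *\<^sub>R z^0)"
    by (subst sums_Suc_iff) simp
  then show ?thesis by (simp add: scaleR_conv_of_real sin_coeff_def)
qed

lemma ssin_summable: fixes z :: complex shows "summable (\<lambda>n. of_real (sin_coeff (Suc n)) * z^n)"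
proof (cases "z = 0")
  case True
  then show ?thesis by (simp add: summable_0_powser)
next
  case False
  have "(\<lambda>n. (of_real (sin_coeff (Suc n)) * z^(Suc n)) / z) sums (sin z / z)"
    using ssin_sums_sin by (rule sums_divide)
  then show ?thesis using False by (simp add: sums_summable mult.commute mult.left_commute)
qed

lemma z_ssin: fixes z :: complex shows "z * ssin z = sin z"
proof -
  have "(\<lambda>n. z * (of_real (sin_coeff (Suc n)) * z^n)) sums (z * ssin z)"
    unfolding ssin_def by (intro sums_mult summable_sums ssin_summable)
  then have "(\<lambda>n. of_real (sin_coeff (Suc n)) * z^(Suc n)) sums (z * ssin z)"
    by (simp add: mult.commute mult.left_commute)
  then show ?thesis using ssin_sums_sin sums_unique2 by blast
qed

lemma ssin_deriv: "\<exists>D. (ssin has_field_derivative D) (at z)"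
  unfolding ssin_def[abs_def] using termdiffs_strong_converges_everywhere[OF ssin_summable] by blast

lemma ssin_holo: "ssin holomorphic_on UNIV"
  by (metis field_differentiable_def holomorphic_onI field_differentiable_at_within ssin_deriv)

lemma ssin_cont: "continuous_on UNIV ssin"
  using holomorphic_on_imp_continuous_on ssin_holo by blast

lemma norm_sin_le_exp: fixes w :: complex shows "norm (sin w) \<le> exp \<bar>Im w\<bar>"
proof -
  have a: "exp (2 * Im w) \<le> exp \<bar>Im w\<bar> ^ 2" "inverse (exp (2 * Im w)) \<le> exp \<bar>Im w\<bar> ^ 2"
    by (auto simp: exp_minus[symmetric] exp_double[symmetric] power2_eq_square exp_add[symmetric])
  have b: "- cos (2 * Re w) \<le> exp \<bar>Im w\<bar> ^ 2"
    by (smt (verit) cos_ge_minus_one one_le_exp_iff one_le_power abs_ge_zero)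
  have "norm (sin w) ^ 2 \<le> exp \<bar>Im w\<bar> ^ 2"
    unfolding norm_sin_squared using a b by simp
  then show ?thesis by (rule power2_le_imp_le) simp
qed

lemma norm_sin_shift:
  fixes z :: complex and m :: int
  shows "norm (sin (complex_of_real pi * z)) = norm (sin (complex_of_real pi * (z - of_int m)))"
proof -
  have s0: "sin (real_of_int m * pi) = 0" by (simp add: sin_times_pi_eq_0)
  have "cos (real_of_int m * pi) ^ 2 = 1"
    using sin_cos_squared_add[of "real_of_int m * pi"] s0 by simp
  then have c1: "\<bar>cos (real_of_int m * pi)\<bar> = 1"
    by (auto simp: power2_eq_1_iff)
  have "complex_of_real pi * (z - of_int m) = complex_of_real pi * z - complex_of_real (real_of_int m * pi)"
    by (simp add: algebra_simps)
  then have "sin (complex_of_real pi * (z - of_int m)) = sin (complex_of_real pi * z) * complex_of_real (cos (real_of_int m * pi))"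
    by (simp add: sin_diff sin_int_times_real cos_int_times_real s0)
  then show ?thesis by (simp add: norm_mult c1)
qed

lemma ssin_bounded: "\<exists>M>0. \<forall>w. norm w \<le> 1 \<longrightarrow> norm (ssin w) \<le> M"
proof -
  have "compact (ssin ` cball 0 1)"
    by (intro compact_continuous_image continuous_on_subset[OF ssin_cont]) auto
  then obtain M where "\<forall>y\<in>ssin ` cball 0 1. norm y \<le> M"
    using compact_imp_bounded bounded_iff by metis
  then show ?thesis by (intro exI[of _ "\<bar>M\<bar> + 1"]) force
qed

lemma sinc_bound: "\<exists>B>0. \<forall>z (m::int). norm (sin (complex_of_real pi * z) / (z - of_int m)) \<le> B * exp (pi * \<bar>Im z\<bar>)"
proof -
  obtain M where M: "M > 0" "\<And>w. norm w \<le> 1 \<Longrightarrow> norm (ssin w) \<le> M"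
    using ssin_bounded by blast
  have "norm (sin (complex_of_real pi * z) / (z - of_int m)) \<le> (pi * (M + 1)) * exp (pi * \<bar>Im z\<bar>)" for z m
  proof -
    define w where "w = complex_of_real pi * (z - of_int m)"
    have e1: "1 \<le> exp (pi * \<bar>Im z\<bar>)" by simp
    have ns: "norm (sin (complex_of_real pi * z)) = norm (sin w)"
      unfolding w_def by (rule norm_sin_shift)
    show ?thesis
    proof (cases "norm w \<le> 1")
      case True
      show ?thesis
      proof (cases "z = of_int m")
        case True then show ?thesis using M by (simp add: mult_nonneg_nonneg)
      next
        case False
        have "sin w = w * ssin w" by (simp add: z_ssin)
        then have "norm (sin (complex_of_real pi * z)) = pi * norm (z - of_int m) * norm (ssin w)"
          unfolding ns by (simp add: norm_mult w_def)
        then have "norm (sin (complex_of_real pi * z) / (z - of_int m)) = pi * norm (ssin w)"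
          using False by (simp add: norm_divide)
        also have "\<dots> \<le> pi * M" using M True by simp
        also have "\<dots> \<le> (pi * (M + 1)) * exp (pi * \<bar>Im z\<bar>)"
        proof -
          have "pi * M \<le> pi * (M + 1)" by simp
          also have "\<dots> \<le> (pi * (M + 1)) * exp (pi * \<bar>Im z\<bar>)"
          proof -
            have "0 \<le> pi * (M + 1)" using M by (simp add: zero_le_mult_iff)
            from mult_left_mono[OF e1 this] show ?thesis by simp
          qed
          finally show ?thesis .
        qed
        finally show ?thesis .
      qed
    next
      case False
      have nw: "norm w = pi * norm (z - of_int m)" unfolding w_def by (simp add: norm_mult)
      have nz: "norm (z - of_int m) > 1 / pi"
        using False nw pi_gt_zero by (simp add: divide_less_eq mult.commute)
      have imw: "\<bar>Im w\<bar> = pi * \<bar>Im z\<bar>" by (simp add: w_def abs_mult)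
      have "norm (sin (complex_of_real pi * z) / (z - of_int m)) = norm (sin w) / norm (z - of_int m)"
        by (simp add: ns norm_divide)
      also have "\<dots> \<le> exp (pi * \<bar>Im z\<bar>) / (1 / pi)"
        using norm_sin_le_exp[of w] imw nz
        by (intro frac_le) auto
      also have "\<dots> = pi * exp (pi * \<bar>Im z\<bar>)" by simp
      also have "\<dots> \<le> (pi * (M + 1)) * exp (pi * \<bar>Im z\<bar>)"
        using M by (intro mult_right_mono) auto
      finally show ?thesis .
    qed
  qed
  then show ?thesis using M by (intro exI[of _ "pi * (M + 1)"]) auto
qed



lemma entire_cont: "entire f \<Longrightarrow> continuous_on UNIV f"
  unfolding entire_def using holomorphic_on_imp_continuous_on by blast

lemma entire_meas: "entire f \<Longrightarrow> (\<lambda>x::real. f (complex_of_real x)) \<in> borel_measurable lborel"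
proof -
  assume "entire f"
  have c1: "continuous_on UNIV (\<lambda>x::real. complex_of_real x)"
    by (intro continuous_on_of_real continuous_on_id)
  have "continuous_on UNIV (f \<circ> (\<lambda>x::real. complex_of_real x))"
    by (rule continuous_on_compose[OF c1 continuous_on_subset[OF entire_cont[OF \<open>entire f\<close>]]]) auto
  then have "(f \<circ> (\<lambda>x::real. complex_of_real x)) \<in> borel_measurable borel"
    by (rule borel_measurable_continuous_onI)
  then show ?thesis by (simp add: o_def)
qed

lemma sq_sum_le: fixes a b :: real shows "(a + b)\<^sup>2 \<le> 2 * a\<^sup>2 + 2 * b\<^sup>2"
proof -
  have "0 \<le> (a - b)\<^sup>2" by simp
  then show ?thesis unfolding power2_sum power2_diff by linarith
qed

lemma PW_cmult: assumes "f \<in> PW" shows "(\<lambda>z. c * f z) \<in> PW"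
proof -
  have e: "entire f" "exp_type_le pi f" and i: "integrable lborel (\<lambda>x::real. (norm (f (complex_of_real x)))\<^sup>2)"
    using assms by (auto simp: PW_def)
  have "entire (\<lambda>z. c * f z)" using e unfolding entire_def by (auto intro: holomorphic_intros)
  moreover have "exp_type_le pi (\<lambda>z. c * f z)"
    unfolding exp_type_le_def
  proof (intro allI impI)
    fix \<epsilon> :: real assume "\<epsilon> > 0"
    then obtain C where C: "\<And>z. norm (f z) \<le> C * exp ((pi + \<epsilon>) * norm z)"
      using e(2) unfolding exp_type_le_def by blast
    show "\<exists>C. \<forall>z. norm (c * f z) \<le> C * exp ((pi + \<epsilon>) * norm z)"
      by (intro exI[of _ "norm c * C"] allI) (simp add: norm_mult mult.assoc mult_left_mono C)
  qed
  moreover have "integrable lborel (\<lambda>x::real. (norm (c * f (complex_of_real x)))\<^sup>2)"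
    using integrable_mult_left[OF i, of "(norm c)^2"] by (simp add: norm_mult power_mult_distrib)
  ultimately show ?thesis by (simp add: PW_def)
qed

lemma PW_diff: assumes "f \<in> PW" "g \<in> PW" shows "(\<lambda>z. f z - g z) \<in> PW"
proof -
  have e: "entire f" "exp_type_le pi f" and i: "integrable lborel (\<lambda>x::real. (norm (f (complex_of_real x)))\<^sup>2)"
    using assms by (auto simp: PW_def)
  have e2: "entire g" "exp_type_le pi g" and i2: "integrable lborel (\<lambda>x::real. (norm (g (complex_of_real x)))\<^sup>2)"
    using assms by (auto simp: PW_def)
  have ent: "entire (\<lambda>z. f z - g z)" using e e2 unfolding entire_def by (auto intro: holomorphic_intros)
  moreover have "exp_type_le pi (\<lambda>z. f z - g z)"
    unfolding exp_type_le_def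
  proof (intro allI impI)
    fix \<epsilon> :: real assume "\<epsilon> > 0"
    then obtain C where C: "\<And>z. norm (f z) \<le> C * exp ((pi + \<epsilon>) * norm z)"
      using e(2) unfolding exp_type_le_def by blast
    obtain D where D: "\<And>z. norm (g z) \<le> D * exp ((pi + \<epsilon>) * norm z)"
      using e2(2) \<open>\<epsilon> > 0\<close> unfolding exp_type_le_def by blast
    show "\<exists>C. \<forall>z. norm (f z - g z) \<le> C * exp ((pi + \<epsilon>) * norm z)"
    proof (intro exI[of _ "C + D"] allI)
      fix z
      have "norm (f z - g z) \<le> norm (f z) + norm (g z)" by (rule norm_triangle_ineq4)
      also have "\<dots> \<le> C * exp ((pi + \<epsilon>) * norm z) + D * exp ((pi + \<epsilon>) * norm z)"
        using C D by (rule add_mono)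
      finally show "norm (f z - g z) \<le> (C + D) * exp ((pi + \<epsilon>) * norm z)"
        by (simp add: distrib_right)
    qed
  qed
  moreover have "integrable lborel (\<lambda>x::real. (norm (f (complex_of_real x) - g (complex_of_real x)))\<^sup>2)"
  proof (rule Bochner_Integration.integrable_bound)
    show "integrable lborel (\<lambda>x::real. 2 * (norm (f (complex_of_real x)))\<^sup>2 + 2 * (norm (g (complex_of_real x)))\<^sup>2)"
      using i i2 by auto
    show "(\<lambda>x::real. (norm (f (complex_of_real x) - g (complex_of_real x)))\<^sup>2) \<in> borel_measurable lborel"
      using entire_meas[OF ent] by measurable
    show "AE x in lborel. norm ((norm (f (complex_of_real x) - g (complex_of_real x)))\<^sup>2)
        \<le> norm (2 * (norm (f (complex_of_real x)))\<^sup>2 + 2 * (norm (g (complex_of_real x)))\<^sup>2)"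
    proof (intro AE_I2)
      fix x :: real
      have t: "norm (f x - g x) \<le> norm (f x) + norm (g x)" by (rule norm_triangle_ineq4)
      have "(norm (f x - g x))\<^sup>2 \<le> (norm (f x) + norm (g x))\<^sup>2"
        using t by (intro power_mono) auto
      also have "\<dots> \<le> 2 * (norm (f x))\<^sup>2 + 2 * (norm (g x))\<^sup>2"
        by (rule sq_sum_le)
      finally show "norm ((norm (f (complex_of_real x) - g (complex_of_real x)))\<^sup>2)
        \<le> norm (2 * (norm (f (complex_of_real x)))\<^sup>2 + 2 * (norm (g (complex_of_real x)))\<^sup>2)"
        by simp
    qed
  qed
  ultimately show ?thesis by (simp add: PW_def)
qed




lemma not_int_shift:
  fixes n :: int and j :: nat
  shows "complex_of_int n + complex_of_real (1 / (real j + 2)) \<notin> \<int>"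
proof
  assume "complex_of_int n + complex_of_real (1 / (real j + 2)) \<in> \<int>"
  then have "complex_of_int n + complex_of_real (1 / (real j + 2)) - complex_of_int n \<in> \<int>"
    by (intro Ints_diff) auto
  then have "(1 / (real j + 2)) \<in> \<int>" by (simp only: add_diff_cancel_left' of_real_in_Ints_iff)
  then obtain k where k: "1 / (real j + 2) = of_int k" by (auto elim: Ints_cases)
  have "0 < 1 / (real j + 2)" "1 / (real j + 2) < 1" by (auto simp: field_simps)
  then show False using k by (metis of_int_0_less_iff of_int_less_1_iff not_less zero_less_iff_neq_zero int_one_le_iff_zero_less less_le_not_le)
qed

lemma GL_bound:
  fixes H :: "complex \<Rightarrow> complex" and d :: "nat \<Rightarrow> complex" and m :: "nat \<Rightarrow> int"
  assumes ent: "entire H" and sd: "summable (\<lambda>k. norm (d k))"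
    and rep: "\<And>z. z \<notin> \<int> \<Longrightarrow> (\<lambda>k. d k * (sin (complex_of_real pi * z) / (z - of_int (m k)))) sums H z"
  shows "\<exists>K\<ge>0. \<forall>z. norm (H z) \<le> K * exp (pi * \<bar>Im z\<bar>)"
proof -
  obtain B where B: "B > 0" "\<And>z (m::int). norm (sin (complex_of_real pi * z) / (z - of_int m)) \<le> B * exp (pi * \<bar>Im z\<bar>)"
    using sinc_bound by blast
  define P where "P = (\<Sum>k. norm (d k))"
  have P0: "P \<ge> 0" unfolding P_def using sd by (simp add: suminf_nonneg)
  have nonint: "norm (H z) \<le> P * B * exp (pi * \<bar>Im z\<bar>)" if z: "z \<notin> \<int>" for z
  proof -
    define E where "E = B * exp (pi * \<bar>Im z\<bar>)"
    define f where "f = (\<lambda>k. d k * (sin (complex_of_real pi * z) / (z - of_int (m k))))"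
    have fb: "norm (f k) \<le> norm (d k) * E" for k
      unfolding f_def E_def norm_mult by (intro mult_left_mono B(2)) auto
    have s2: "summable (\<lambda>k. norm (d k) * E)" using sd by (rule summable_mult2)
    have s1: "summable (\<lambda>k. norm (f k))"
      by (rule summable_comparison_test'[OF s2]) (use fb in auto)
    have "H z = suminf f" using rep[OF z] unfolding f_def by (simp add: sums_iff)
    then have "norm (H z) \<le> (\<Sum>k. norm (f k))" using summable_norm[OF s1] by simp
    also have "\<dots> \<le> (\<Sum>k. norm (d k) * E)" by (rule suminf_le[OF fb s1 s2])
    also have "\<dots> = P * E" unfolding P_def using suminf_mult2[OF sd] by simp
    finally show ?thesis by (simp add: E_def mult.assoc)
  qed
  have "norm (H z) \<le> P * B * exp (pi * \<bar>Im z\<bar>)" for z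
  proof (cases "z \<in> \<int>")
    case False then show ?thesis by (rule nonint)
  next
    case True
    then obtain n where n: "z = of_int n" by (auto elim: Ints_cases)
    define zs where "zs = (\<lambda>j::nat. z + complex_of_real (1 / (real j + 2)))"
    have "(\<lambda>j::nat. 1 / (real j + 2)) \<longlonglongrightarrow> 0"
      by real_asymp
    from tendsto_of_real[OF this, where 'a=complex] have "(\<lambda>j. complex_of_real (1 / (real j + 2))) \<longlonglongrightarrow> 0"
      by (simp only: of_real_0)
    then have "zs \<longlonglongrightarrow> z" unfolding zs_def using tendsto_add[of "\<lambda>_. z" z sequentially] by force
    moreover have "isCont H z"
      using entire_cont[OF ent] by (simp add: continuous_on_eq_continuous_at)
    ultimately have "(\<lambda>j. norm (H (zs j))) \<longlonglongrightarrow> norm (H z)"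
      by (intro tendsto_norm isCont_tendsto_compose[of z H])
    moreover have "norm (H (zs j)) \<le> P * B * exp (pi * \<bar>Im z\<bar>)" for j
      using nonint[of "zs j"] not_int_shift[of n j] by (simp add: zs_def n)
    ultimately show ?thesis by (intro LIMSEQ_le_const2) auto
  qed
  then show ?thesis using P0 B by (intro exI[of _ "P * B"]) auto
qed




definition sqs :: "real \<Rightarrow> real" where "sqs y = (sin (pi * y) / y)^2"

lemma sqs_nonneg: "0 \<le> sqs y" by (simp add: sqs_def)

lemma sin_sq_le: "(sin (pi * y))^2 \<le> pi^2 * y^2"
proof -
  have "\<bar>sin (pi * y)\<bar> \<le> \<bar>pi * y\<bar>" by (rule abs_sin_x_le_abs_x)
  then have "\<bar>sin (pi * y)\<bar>^2 \<le> \<bar>pi * y\<bar>^2" by (intro power_mono) auto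
  then show ?thesis by (simp add: power_mult_distrib)
qed

lemma sqs_le_pi: "sqs y \<le> pi^2"
proof (cases "y = 0")
  case True then show ?thesis by (simp add: sqs_def)
next
  case False
  then have "y^2 > 0" by simp
  then show ?thesis using sin_sq_le[of y] by (simp add: sqs_def power_divide divide_le_eq)
qed

lemma sqs_le: "sqs y \<le> 2 * pi^2 * inverse (1 + y^2)"
proof (cases "y = 0")
  case True then show ?thesis by (simp add: sqs_def)
next
  case False
  then have y2: "y^2 > 0" by simp
  have s1: "(sin (pi * y))^2 \<le> 1" by (simp add: abs_sin_le_one abs_square_le_1)
  have p1: "1 \<le> pi^2" using pi_gt3 by (smt (verit) one_le_power)
  have "(sin (pi * y))^2 * (1 + y^2) = (sin (pi * y))^2 + (sin (pi * y))^2 * y^2"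
    by (simp add: algebra_simps)
  also have "\<dots> \<le> pi^2 * y^2 + 1 * y^2"
    using sin_sq_le[of y] mult_right_mono[OF s1, of "y^2"] by simp
  also have "\<dots> \<le> 2 * pi^2 * y^2"
  proof -
    have "1 * y^2 \<le> pi^2 * y^2" by (rule mult_right_mono[OF p1]) simp
    then show ?thesis by linarith
  qed
  finally have "(sin (pi * y))^2 * (1 + y^2) \<le> 2 * pi^2 * y^2" .
  moreover have pos: "1 + y^2 > 0" by (simp add: add_pos_nonneg)
  ultimately have c: "(sin (pi * y))^2 \<le> 2 * pi^2 * y^2 / (1 + y^2)"
    by (simp add: le_divide_eq)
  have "sqs y = (sin (pi * y))^2 / y^2" by (simp add: sqs_def power_divide)
  also have "\<dots> \<le> (2 * pi^2 * y^2 / (1 + y^2)) / y^2"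
    using c y2 by (intro divide_right_mono) auto
  also have "\<dots> = 2 * pi^2 * inverse (1 + y^2)" using False by (simp add: divide_inverse)
  finally show ?thesis .
qed

lemma sqs_meas[measurable]: "sqs \<in> borel_measurable borel"
  unfolding sqs_def by measurable

lemma sqs_finite: "(\<integral>\<^sup>+y. ennreal (sqs y) \<partial>lborel) < \<infinity>"
proof -
  have "integrable lborel (\<lambda>x::real. inverse (1 + x^2))"
    using integrable_inverse_1_plus_square by (simp add: set_integrable_def)
  then have "integrable lborel (\<lambda>x::real. 2 * pi^2 * inverse (1 + x^2))" by simp
  then have "(\<integral>\<^sup>+x. ennreal (norm (2 * pi^2 * inverse (1 + x^2))) \<partial>lborel) < \<infinity>"
    by (rule conjunct2[OF iffD1[OF integrable_iff_bounded]])
  moreover have "(\<integral>\<^sup>+y. ennreal (sqs y) \<partial>lborel) \<le> (\<integral>\<^sup>+x. ennreal (norm (2 * pi^2 * inverse (1 + x^2))) \<partial>lborel)"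
  proof (intro nn_integral_mono ennreal_leI)
    fix x :: real
    have "1 + x^2 > 0" by (simp add: add_pos_nonneg)
    then show "sqs x \<le> norm (2 * pi^2 * inverse (1 + x^2))"
      using sqs_le[of x] by simp
  qed
  ultimately show ?thesis by (meson le_less_trans)
qed

lemma sqs_shift_finite: "(\<integral>\<^sup>+x. ennreal (sqs (x - c)) \<partial>lborel) = (\<integral>\<^sup>+y. ennreal (sqs y) \<partial>lborel)"
  using nn_integral_real_affine[of "\<lambda>y. ennreal (sqs y)" 1 "-c"] by simp

lemma inf_CS:
  fixes p t :: "nat \<Rightarrow> real"
  assumes p: "\<And>k. 0 \<le> p k" and sp: "summable p" and s1: "summable (\<lambda>k. p k * t k)"
    and s2: "summable (\<lambda>k. p k * (t k)^2)"
  shows "(\<Sum>k. p k * t k)^2 \<le> (\<Sum>k. p k) * (\<Sum>k. p k * (t k)^2)"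
proof -
  have fin: "(\<Sum>k<n. p k * t k)^2 \<le> (\<Sum>k<n. p k) * (\<Sum>k<n. p k * (t k)^2)" for n
  proof -
    have "(\<Sum>k<n. sqrt (p k) * (sqrt (p k) * t k))^2 \<le> (\<Sum>k<n. (sqrt (p k))^2) * (\<Sum>k<n. (sqrt (p k) * t k)^2)"
      by (rule Cauchy_Schwarz_ineq_sum)
    then show ?thesis using p by (simp add: power_mult_distrib mult.assoc[symmetric])
  qed
  have l1: "(\<lambda>n. (\<Sum>k<n. p k * t k)^2) \<longlonglongrightarrow> (\<Sum>k. p k * t k)^2"
    by (intro tendsto_power summable_LIMSEQ s1)
  have l2: "(\<lambda>n. (\<Sum>k<n. p k) * (\<Sum>k<n. p k * (t k)^2)) \<longlonglongrightarrow> (\<Sum>k. p k) * (\<Sum>k. p k * (t k)^2)"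
    by (intro tendsto_mult summable_LIMSEQ sp s2)
  show ?thesis using fin by (intro LIMSEQ_le[OF l1 l2]) auto
qed

lemma norm_sinc_real:
  fixes x :: real and m :: int
  shows "(norm (sin (complex_of_real pi * complex_of_real x) / (complex_of_real x - of_int m)))^2 = sqs (x - of_int m)"
proof -
  have "norm (sin (complex_of_real pi * complex_of_real x)) = norm (sin (complex_of_real pi * (complex_of_real x - of_int m)))"
    by (rule norm_sin_shift)
  also have "complex_of_real pi * (complex_of_real x - of_int m) = complex_of_real (pi * (x - of_int m))" by simp
  also have "norm (sin (complex_of_real (pi * (x - of_int m)))) = \<bar>sin (pi * (x - of_int m))\<bar>"
    by (simp only: sin_of_real norm_of_real)
  finally have a: "norm (sin (complex_of_real pi * complex_of_real x)) = \<bar>sin (pi * (x - of_int m))\<bar>" .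
  have b: "norm (complex_of_real x - of_int m) = \<bar>x - of_int m\<bar>"
  proof -
    have "complex_of_real x - of_int m = complex_of_real (x - of_int m)" by simp
    then show ?thesis by (simp only: norm_of_real)
  qed
  show ?thesis unfolding norm_divide a b sqs_def by (simp add: power_divide)
qed




lemma GL:
  fixes H :: "complex \<Rightarrow> complex" and d :: "nat \<Rightarrow> complex" and m :: "nat \<Rightarrow> int"
  assumes ent: "entire H" and sd: "summable (\<lambda>k. norm (d k))"
    and rep: "\<And>z. z \<notin> \<int> \<Longrightarrow> (\<lambda>k. d k * (sin (complex_of_real pi * z) / (z - of_int (m k)))) sums H z"
  shows "H \<in> PW"
proof -
  obtain K where K: "K \<ge> 0" "\<And>z. norm (H z) \<le> K * exp (pi * \<bar>Im z\<bar>)"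
    using GL_bound[OF ent sd rep] by blast
  have et: "exp_type_le pi H"
    unfolding exp_type_le_def
  proof (intro allI impI exI[of _ K])
    fix \<epsilon> :: real and z assume e: "\<epsilon> > 0"
    have "pi * \<bar>Im z\<bar> \<le> (pi + \<epsilon>) * norm z"
      using e abs_Im_le_cmod[of z] by (intro mult_mono) (auto simp del: abs_Im_le_cmod)
    then have "exp (pi * \<bar>Im z\<bar>) \<le> exp ((pi + \<epsilon>) * norm z)" by simp
    then have "K * exp (pi * \<bar>Im z\<bar>) \<le> K * exp ((pi + \<epsilon>) * norm z)"
      using K(1) by (rule mult_left_mono)
    then show "norm (H z) \<le> K * exp ((pi + \<epsilon>) * norm z)" using K(2)[of z] by linarith
  qed
  define p where "p = (\<lambda>k. norm (d k))"
  define P where "P = (\<Sum>k. p k)"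
  have p0: "\<And>k. 0 \<le> p k" unfolding p_def by simp
  have sp: "summable p" unfolding p_def by (rule sd)
  have P0: "0 \<le> P" unfolding P_def using sp p0 by (simp add: suminf_nonneg)
  have sps: "summable (\<lambda>k. p k * sqs (x - of_int (m k)))" for x
  proof (rule summable_comparison_test'[OF summable_mult2[OF sp, of "pi^2"]])
    fix k
    have "norm (p k * sqs (x - of_int (m k))) = p k * sqs (x - of_int (m k))"
      using p0[of k] sqs_nonneg[of "x - of_int (m k)"] by simp
    also have "\<dots> \<le> p k * pi^2" by (rule mult_left_mono[OF sqs_le_pi p0])
    finally show "norm (p k * sqs (x - of_int (m k))) \<le> p k * pi^2" .
  qed
  have pw: "(norm (H (complex_of_real x)))^2 \<le> P * (\<Sum>k. p k * sqs (x - of_int (m k)))"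
    if x: "x \<notin> \<int>" for x :: real
  proof -
    have xz: "complex_of_real x \<notin> \<int>" using x by (simp only: of_real_in_Ints_iff not_False_eq_True)
    define t where "t = (\<lambda>k. norm (sin (complex_of_real pi * complex_of_real x) / (complex_of_real x - of_int (m k))))"
    have t2: "(t k)^2 = sqs (x - of_int (m k))" for k
      unfolding t_def by (rule norm_sinc_real)
    have t0: "0 \<le> t k" for k unfolding t_def by (rule norm_ge_zero)
    have tpi: "t k \<le> pi" for k
    proof -
      have "(t k)^2 \<le> pi^2" unfolding t2 by (rule sqs_le_pi)
      then show ?thesis by (rule power2_le_imp_le) simp
    qed
    have s1: "summable (\<lambda>k. p k * t k)"
    proof (rule summable_comparison_test'[OF summable_mult2[OF sp, of "pi"]])
      fix k
      have "norm (p k * t k) = p k * t k" using p0[of k] t0[of k] by simp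
      also have "\<dots> \<le> p k * pi" by (rule mult_left_mono[OF tpi p0])
      finally show "norm (p k * t k) \<le> p k * pi" .
    qed
    have s2: "summable (\<lambda>k. p k * (t k)^2)" using sps[of x] by (simp add: t2)
    define f where "f = (\<lambda>k. d k * (sin (complex_of_real pi * complex_of_real x) / (complex_of_real x - of_int (m k))))"
    have nf: "norm (f k) = p k * t k" for k unfolding f_def p_def t_def by (rule norm_mult)
    have "H (complex_of_real x) = suminf f" using rep[OF xz] unfolding f_def by (simp add: sums_iff)
    then have "norm (H (complex_of_real x)) \<le> (\<Sum>k. norm (f k))"
      using summable_norm[of f] s1 by (simp add: nf)
    then have h1: "norm (H (complex_of_real x)) \<le> (\<Sum>k. p k * t k)" by (simp add: nf)
    have "(norm (H (complex_of_real x)))^2 \<le> (\<Sum>k. p k * t k)^2"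
      using h1 by (intro power_mono) auto
    also have "\<dots> \<le> P * (\<Sum>k. p k * (t k)^2)"
      unfolding P_def by (rule inf_CS[OF p0 sp s1 s2])
    finally show ?thesis by (simp add: t2)
  qed
  define I where "I = (\<integral>\<^sup>+y. ennreal (sqs y) \<partial>lborel)"
  have I: "I < \<infinity>" unfolding I_def by (rule sqs_finite)
  have meas: "(\<lambda>x::real. (norm (H (complex_of_real x)))\<^sup>2) \<in> borel_measurable lborel"
    using entire_meas[OF ent] by measurable
  have ae: "AE x in lborel. x \<notin> \<int>"
    by (intro AE_not_in countable_imp_null_set_lborel countable_int)
  have "(\<integral>\<^sup>+x. ennreal (norm ((norm (H (complex_of_real x)))\<^sup>2)) \<partial>lborel)
      \<le> (\<integral>\<^sup>+x. ennreal P * (\<Sum>k. ennreal (p k * sqs (x - of_int (m k)))) \<partial>lborel)"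
  proof (rule nn_integral_mono_AE)
    show "AE x in lborel. ennreal (norm ((norm (H (complex_of_real x)))\<^sup>2))
        \<le> ennreal P * (\<Sum>k. ennreal (p k * sqs (x - of_int (m k))))"
      using ae
    proof eventually_elim
      case (elim x)
      have "ennreal (norm ((norm (H (complex_of_real x)))\<^sup>2)) \<le> ennreal (P * (\<Sum>k. p k * sqs (x - of_int (m k))))"
        using pw[OF elim] by (intro ennreal_leI) simp
      also have "\<dots> = ennreal P * ennreal (\<Sum>k. p k * sqs (x - of_int (m k)))"
      proof -
        have "0 \<le> (\<Sum>k. p k * sqs (x - of_int (m k)))"
          using sps[of x] p0 sqs_nonneg by (intro suminf_nonneg) (auto intro: mult_nonneg_nonneg)
        then show ?thesis by (rule ennreal_mult[OF P0])
      qed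
      also have "ennreal (\<Sum>k. p k * sqs (x - of_int (m k))) = (\<Sum>k. ennreal (p k * sqs (x - of_int (m k))))"
        using p0 sqs_nonneg sps[of x] by (intro suminf_ennreal2[symmetric]) auto
      finally show ?case .
    qed
  qed
  also have "\<dots> = ennreal P * (\<integral>\<^sup>+x. (\<Sum>k. ennreal (p k * sqs (x - of_int (m k)))) \<partial>lborel)"
    by (rule nn_integral_cmult) measurable
  also have "(\<integral>\<^sup>+x. (\<Sum>k. ennreal (p k * sqs (x - of_int (m k)))) \<partial>lborel)
      = (\<Sum>k. (\<integral>\<^sup>+x. ennreal (p k * sqs (x - of_int (m k))) \<partial>lborel))"
    by (rule nn_integral_suminf) measurable
  also have "\<dots> = (\<Sum>k. ennreal (p k) * I)"
  proof (rule suminf_cong)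
    fix k
    have "(\<integral>\<^sup>+x. ennreal (p k * sqs (x - of_int (m k))) \<partial>lborel)
        = (\<integral>\<^sup>+x. ennreal (p k) * ennreal (sqs (x - of_int (m k))) \<partial>lborel)"
      by (intro nn_integral_cong) (rule ennreal_mult[OF p0 sqs_nonneg])
    also have "\<dots> = ennreal (p k) * (\<integral>\<^sup>+x. ennreal (sqs (x - of_int (m k))) \<partial>lborel)"
      by (rule nn_integral_cmult) measurable
    also have "\<dots> = ennreal (p k) * I" unfolding I_def by (simp only: sqs_shift_finite)
    finally show "(\<integral>\<^sup>+x. ennreal (p k * sqs (x - of_int (m k))) \<partial>lborel) = ennreal (p k) * I" .
  qed
  also have "\<dots> = ennreal P * I"
    unfolding P_def using suminf_ennreal2[OF p0 sp] by simp
  finally have fin: "(\<integral>\<^sup>+x. ennreal (norm ((norm (H (complex_of_real x)))\<^sup>2)) \<partial>lborel) < \<infinity>"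
    using I by (simp add: ennreal_mult_less_top le_less_trans)
  have "integrable lborel (\<lambda>x::real. (norm (H (complex_of_real x)))\<^sup>2)"
    using meas fin by (simp add: integrable_iff_bounded)
  then show ?thesis using ent et by (simp add: PW_def)
qed




lemma nonreal_not_int: fixes z :: complex assumes "Im z \<noteq> 0" shows "z \<notin> \<int>"
  using assms by (auto elim: Ints_cases)

lemma sin_pi_nz: fixes z :: complex assumes "z \<notin> \<int>" shows "sin (complex_of_real pi * z) \<noteq> 0"
proof
  assume "sin (complex_of_real pi * z) = 0"
  then obtain n :: int where n: "complex_of_real pi * z = of_real (n * pi)" by (auto simp: sin_eq_0)
  then have "complex_of_real pi * z = complex_of_real pi * of_int n" by simp
  then have "z = of_int n" by simp
  then show False using assms by simp
qed

lemma has_sum_int_sums: fixes f :: "int \<Rightarrow> complex"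
  assumes "(f has_sum s) UNIV" shows "(\<lambda>k. f (int_decode k)) sums s"
proof -
  have b: "bij_betw int_decode UNIV UNIV" using bij_int_decode by (simp add: bij_def bij_betw_def)
  have "((\<lambda>k. f (int_decode k)) has_sum s) UNIV"
    using has_sum_reindex_bij_betw[OF b, of f s] assms by simp
  then show ?thesis by (rule has_sum_imp_sums)
qed

lemma has_sum_int_sums_real: fixes f :: "int \<Rightarrow> real"
  assumes "(f has_sum s) UNIV" shows "(\<lambda>k. f (int_decode k)) sums s"
proof -
  have b: "bij_betw int_decode UNIV UNIV" using bij_int_decode by (simp add: bij_def bij_betw_def)
  have "((\<lambda>k. f (int_decode k)) has_sum s) UNIV"
    using has_sum_reindex_bij_betw[OF b, of f s] assms by simp
  then show ?thesis by (rule has_sum_imp_sums)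
qed

lemma norm_sub_int_ge: fixes z :: complex shows "\<bar>Im z\<bar> \<le> norm (z - of_int m)"
  using abs_Im_le_cmod[of "z - of_int m"] by simp

definition Sfun :: "complex \<Rightarrow> complex" where
  "Sfun z = complex_of_real pi * ssin (complex_of_real pi * z)"

lemma Sfun_prop: "z * Sfun z = sin (complex_of_real pi * z)"
  unfolding Sfun_def using z_ssin[of "complex_of_real pi * z"] by (simp add: mult.assoc mult.left_commute)

lemma Sfun_entire: "entire Sfun"
proof -
  have "(ssin \<circ> (\<lambda>z. complex_of_real pi * z)) holomorphic_on UNIV"
    by (rule holomorphic_on_compose[OF _ holomorphic_on_subset[OF ssin_holo]]) (auto intro: holomorphic_intros)
  then have "(\<lambda>z. complex_of_real pi * (ssin \<circ> (\<lambda>z. complex_of_real pi * z)) z) holomorphic_on UNIV"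
    by (intro holomorphic_on_mult holomorphic_on_const)
  then show ?thesis unfolding entire_def Sfun_def by (simp add: o_def)
qed

lemma Sfun_PW: "Sfun \<in> PW"
proof (rule GL[OF Sfun_entire, of "\<lambda>k. if k = 0 then 1 else 0" "\<lambda>_. 0"])
  show "summable (\<lambda>k. norm (if k = 0 then 1 else (0::complex)))"
  proof -
    have "(\<lambda>k::nat. norm (if k = 0 then 1 else (0::complex))) = (\<lambda>k. if k = 0 then (\<lambda>_. 1::real) k else 0)"
      by auto
    moreover have "summable (\<lambda>k::nat. if k = 0 then (\<lambda>_. 1::real) k else 0)" by (rule summable_single)
    ultimately show ?thesis by (simp only:)
  qed
next
  fix z :: complex assume z: "z \<notin> \<int>"
  then have z0: "z \<noteq> 0" by auto
  have "(\<lambda>k. if k = 0 then sin (complex_of_real pi * z) / z else 0) sums (sin (complex_of_real pi * z) / z)"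
    using sums_single[of 0 "\<lambda>_. sin (complex_of_real pi * z) / z"] by simp
  moreover have "sin (complex_of_real pi * z) / z = Sfun z"
    using Sfun_prop[of z] z0 by (simp add: field_simps)
  moreover have "(\<lambda>k::nat. (if k = 0 then 1 else 0) * (sin (complex_of_real pi * z) / (z - of_int 0)))
      = (\<lambda>k. if k = 0 then sin (complex_of_real pi * z) / z else 0)"
    by (rule ext) simp
  ultimately show "(\<lambda>k. (if k = 0 then 1 else 0) * (sin (complex_of_real pi * z) / (z - of_int 0))) sums Sfun z"
    by (simp only:)
qed




lemma alg_id0:
  fixes A z w n :: complex
  assumes "z - n \<noteq> 0" "w - n \<noteq> 0" "w - z \<noteq> 0"
  shows "(A / (z - n) + (-1) * (A / (w - n))) / (w - z) = (A / (w - n)) / (z - n)"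
proof -
  have "A / (z - n) + (-1) * (A / (w - n)) = A * ((w - n) - (z - n)) / ((z - n) * (w - n))"
    using assms by (simp add: divide_simps) (simp add: algebra_simps)
  also have "\<dots> = A * (w - z) / ((z - n) * (w - n))" by simp
  finally show ?thesis using assms by (simp add: divide_simps)
qed

lemma alg_id:
  fixes A z w n :: complex
  assumes "z \<noteq> n" "w \<noteq> n" "z \<noteq> w"
  shows "(A / (z - n) + (-1) * (A / (w - n))) / (w - z) = (A / (w - n)) / (z - n)"
  using assms by (intro alg_id0) auto

lemma alg2: fixes s F C q :: complex assumes "s \<noteq> 0" shows "s * ((F / s - C) / q) = (F - C * s) / q"
proof -
  have e: "s * (F / s - C) = F - C * s" using assms by (simp add: field_simps)
  show ?thesis by (subst e[symmetric]) (rule times_divide_eq_right)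
qed

lemma alg3: fixes s F C q :: complex assumes "q \<noteq> 0" shows "F = C * s + q * ((F - C * s) / q)"
  using assms by (simp add: field_simps)

theorem lemma2p1:
  fixes \<Lambda> \<Lambda>1 \<Lambda>2 :: "complex set"
    and G G1 G2 S1 S2 :: "complex \<Rightarrow> complex"
  assumes "\<Lambda> \<inter> \<int> = {}"
    and "kernels_exact \<Lambda>"
    and "generating_function \<Lambda> G"
    and "\<Lambda> = \<Lambda>1 \<union> \<Lambda>2" and "\<Lambda>1 \<inter> \<Lambda>2 = {}"
    and "infinite \<Lambda>1" and "infinite \<Lambda>2"
    and "entire G2" and "genus_le_1 G2 \<Lambda>2" and "simple_zeros_exactly G2 \<Lambda>2"
    and "star_quot_blaschke G2"
    and "entire G1" and "\<And>z. G z = G1 z * G2 z"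
    and "(S1, S2) \<in> Sigma_pairs G G1 G2"
  shows "(\<lambda>z. G1 z * S1 z) \<in> PW_plus_zPW"
proof -
  define F where "F = (\<lambda>z. G1 z * S1 z)"
  from assms(14) have eS1: "entire S1" and
    "\<exists>a :: int \<Rightarrow> complex. (\<forall>z. z \<notin> \<int> \<longrightarrow>
           ((\<lambda>n. a n * G (of_int n) / (z - of_int n)) has_sum
              (G1 z * S1 z / sin (complex_of_real pi * z))) UNIV)"
    unfolding Sigma_pairs_def by auto
  then obtain a :: "int \<Rightarrow> complex" where
    hs1: "\<And>z. z \<notin> \<int> \<Longrightarrow> ((\<lambda>n. a n * G (of_int n) / (z - of_int n)) has_sum (F z / sin (complex_of_real pi * z))) UNIV"
    unfolding F_def by blast
  have eF: "entire F" using assms(12) eS1 unfolding entire_def F_def by (auto intro: holomorphic_intros)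
  define sn where "sn = (\<lambda>z. sin (complex_of_real pi * z))"
  have ii: "\<i> \<notin> \<int>" by (rule nonreal_not_int) simp
  have sni: "sn \<i> \<noteq> 0" unfolding sn_def by (rule sin_pi_nz[OF ii])
  define c where "c = (\<lambda>n::int. a n * G (of_int n) / (\<i> - of_int n))"
  define C where "C = F \<i> / sn \<i>"
  have hc: "(c has_sum C) UNIV" using hs1[OF ii] unfolding c_def C_def sn_def .
  have "(\<lambda>n. norm (c n)) summable_on UNIV"
    using hc summable_on_iff_abs_summable_on_complex by (auto simp: summable_on_def)
  then obtain Pc where "((\<lambda>n. norm (c n)) has_sum Pc) UNIV" by (auto simp: summable_on_def)
  then have "(\<lambda>k. norm (c (int_decode k))) sums Pc" by (rule has_sum_int_sums_real)
  define d where "d = (\<lambda>k. c (int_decode k))"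
  define m where "m = (\<lambda>k. int_decode k)"
  have sd: "summable (\<lambda>k. norm (d k))" unfolding d_def using \<open>(\<lambda>k. norm (c (int_decode k))) sums Pc\<close>
    by (rule sums_summable)
  have T0: "(\<lambda>k. d k / (z - of_int (m k))) sums ((F z / sn z - C) / (\<i> - z))"
    if z: "z \<notin> \<int>" "z \<noteq> \<i>" for z
  proof -
    have h0: "((\<lambda>n. (a n * G (of_int n) / (z - of_int n) + (-1) * c n) / (\<i> - z)) has_sum ((F z / sn z + (-1) * C) / (\<i> - z))) UNIV"
      unfolding sn_def by (intro has_sum_divide_const has_sum_add hs1[OF z(1)] has_sum_cmult_right hc)
    have h: "((\<lambda>n. (a n * G (of_int n) / (z - of_int n) + (-1) * c n) / (\<i> - z)) has_sum ((F z / sn z - C) / (\<i> - z))) UNIV"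
      using h0 by simp
    have eq: "(a n * G (of_int n) / (z - of_int n) + (-1) * c n) / (\<i> - z) = c n / (z - of_int n)" for n
    proof -
      have "z \<noteq> of_int n" using z(1) by auto
      moreover have "\<i> \<noteq> of_int n" using ii Ints_of_int by metis
      ultimately show ?thesis using z(2) unfolding c_def by (rule alg_id)
    qed
    have "((\<lambda>n. c n / (z - of_int n)) has_sum ((F z / sn z - C) / (\<i> - z))) UNIV"
      using h unfolding eq .
    then show ?thesis unfolding d_def m_def by (rule has_sum_int_sums)
  qed
  have sumi: "summable (\<lambda>k. d k / (\<i> - of_int (m k)))"
  proof (rule summable_comparison_test'[OF sd])
    fix k
    have "1 \<le> norm (\<i> - of_int (m k))" using norm_sub_int_ge[of \<i> "m k"] by simp
    have ne: "\<i> \<noteq> of_int (m k)" using ii Ints_of_int by metis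
      show "norm (d k / (\<i> - of_int (m k))) \<le> norm (d k)"
      unfolding norm_divide using ne divide_left_mono[OF \<open>1 \<le> norm (\<i> - of_int (m k))\<close> norm_ge_zero[of "d k"]] by simp
  qed
  define W where "W = (\<lambda>z. if z = \<i> then sn \<i> * (\<Sum>k. d k / (\<i> - of_int (m k))) else (F z - C * sn z) / (\<i> - z))"
  have repW: "(\<lambda>k. d k * (sin (complex_of_real pi * z) / (z - of_int (m k)))) sums W z" if z: "z \<notin> \<int>" for z
  proof (cases "z = \<i>")
    case True
    have "(\<lambda>k. sn \<i> * (d k / (\<i> - of_int (m k)))) sums (sn \<i> * (\<Sum>k. d k / (\<i> - of_int (m k))))"
      by (intro sums_mult summable_sums sumi)
    then show ?thesis using True unfolding W_def sn_def by (simp add: mult.commute mult.left_commute)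
  next
    case False
    have "(\<lambda>k. sn z * (d k / (z - of_int (m k)))) sums (sn z * ((F z / sn z - C) / (\<i> - z)))"
      by (intro sums_mult T0 z False)
    moreover have "sn z * ((F z / sn z - C) / (\<i> - z)) = W z"
      using False alg2[OF sin_pi_nz[OF z], of "F z" C "\<i> - z"] unfolding W_def sn_def by simp
    ultimately show ?thesis unfolding sn_def by (simp add: mult.commute mult.left_commute)
  qed
  have entW: "entire W"
  proof -
    define S where "S = ball \<i> (1/2)"
    have oS: "open S" and cS: "convex S" and iS: "\<i> \<in> S" unfolding S_def by auto
    have Sim: "1/2 < Im z" if "z \<in> S" for z
    proof -
      have "norm (\<i> - z) < 1/2" using that unfolding S_def by (simp add: dist_norm)
      moreover have "\<bar>Im (\<i> - z)\<bar> \<le> norm (\<i> - z)" by (rule abs_Im_le_cmod)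
      ultimately show ?thesis by simp
    qed
    have Sge: "1/2 \<le> norm (z - of_int n)" if "z \<in> S" for z n
      using Sim[OF that] norm_sub_int_ge[of z n] by simp
    have Snz: "z \<notin> \<int>" if "z \<in> S" for z using Sim[OF that] by (intro nonreal_not_int) simp
    define f where "f = (\<lambda>k z. d k / (z - of_int (m k)))"
    define f' where "f' = (\<lambda>k z. - d k / (z - of_int (m k))^2)"
    have fb: "norm (f' k z) \<le> 4 * norm (d k)" if z: "z \<in> S" for k z
    proof -
      have h: "1/2 \<le> norm (z - of_int (m k))" by (rule Sge[OF z])
      then have "(1/2)^2 \<le> (norm (z - of_int (m k)))^2" by (intro power_mono) auto
      then have q: "1/4 \<le> (norm (z - of_int (m k)))^2" by (simp add: power2_eq_square)
      have "norm (f' k z) = norm (d k) / (norm (z - of_int (m k)))^2"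
        unfolding f'_def by (simp add: norm_divide norm_power)
      also have "\<dots> \<le> norm (d k) / (1/4)"
        using q by (intro divide_left_mono) auto
      also have "\<dots> = 4 * norm (d k)" by simp
      finally show ?thesis .
    qed
    have s4: "summable (\<lambda>k. 4 * norm (d k))" using sd by (rule summable_mult)
    have sf': "summable (\<lambda>k. f' k z)" if "z \<in> S" for z
      by (rule summable_comparison_test'[OF s4]) (use fb[OF that] in auto)
    define g' where "g' = (\<lambda>z. \<Sum>k. f' k z)"
    have "\<exists>g. \<forall>x \<in> S. ((\<lambda>n. f n x) sums g x) \<and> ((g has_field_derivative g' x) (at x within S))"
    proof (rule has_complex_derivative_series[OF cS])
      fix n x assume x: "x \<in> S"
      have ne: "x - of_int (m n) \<noteq> 0" using Sge[OF x, of "m n"] by auto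
      have "((\<lambda>z. d n / (z - of_int (m n))) has_field_derivative f' n x) (at x)"
        unfolding f'_def using ne
        by (auto intro!: derivative_eq_intros simp: power2_eq_square field_simps)
      then show "(f n has_field_derivative f' n x) (at x within S)"
        unfolding f_def by (rule has_field_derivative_at_within)
    next
      fix e :: real assume e: "0 < e"
      obtain N where N: "\<And>n. n \<ge> N \<Longrightarrow> norm (\<Sum>i. 4 * norm (d (i + n))) < e"
        using suminf_exist_split[OF e s4] by blast
      show "\<exists>N. \<forall>n x. n \<ge> N \<longrightarrow> x \<in> S \<longrightarrow> cmod ((\<Sum>i<n. f' i x) - g' x) \<le> e"
      proof (intro exI[of _ N] allI impI)
        fix n x assume n: "N \<le> n" and x: "x \<in> S"
        have split: "g' x = (\<Sum>i. f' (i + n) x) + (\<Sum>i<n. f' i x)"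
          unfolding g'_def by (rule suminf_split_initial_segment[OF sf'[OF x]])
        have st: "summable (\<lambda>i. 4 * norm (d (i + n)))"
          using summable_ignore_initial_segment[OF s4, of n] by simp
        have st2: "summable (\<lambda>i. norm (f' (i + n) x))"
          by (rule summable_comparison_test'[OF st]) (use fb[OF x] in auto)
        have "cmod ((\<Sum>i<n. f' i x) - g' x) = norm (\<Sum>i. f' (i + n) x)"
          unfolding split by (simp add: norm_minus_commute)
        also have "\<dots> \<le> (\<Sum>i. norm (f' (i + n) x))" by (rule summable_norm[OF st2])
        also have "\<dots> \<le> (\<Sum>i. 4 * norm (d (i + n)))"
          by (rule suminf_le[OF _ st2 st]) (use fb[OF x] in auto)
        also have "\<dots> \<le> norm (\<Sum>i. 4 * norm (d (i + n)))" by simp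
        also have "\<dots> \<le> e" using N[OF n] by simp
        finally show "cmod ((\<Sum>i<n. f' i x) - g' x) \<le> e" .
      qed
    next
      show "\<exists>x l. x \<in> S \<and> ((\<lambda>n. f n x) sums l)"
        using iS sumi unfolding f_def by (blast intro: summable_sums)
    qed
    then obtain g where g: "\<And>x. x \<in> S \<Longrightarrow> (\<lambda>n. f n x) sums g x"
      "\<And>x. x \<in> S \<Longrightarrow> (g has_field_derivative g' x) (at x within S)" by blast
    have gd: "(g has_field_derivative g' \<i>) (at \<i>)"
      using g(2)[OF iS] at_within_open[OF iS oS] by simp
    have snh: "sn holomorphic_on UNIV" unfolding sn_def by (intro holomorphic_intros)
    have WS: "W z = sn z * g z" if z: "z \<in> S" for z
    proof -
      have "(\<lambda>k. sn z * f k z) sums (sn z * g z)" by (intro sums_mult g(1) z)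
      moreover have "(\<lambda>k. sn z * f k z) = (\<lambda>k. d k * (sin (complex_of_real pi * z) / (z - of_int (m k))))"
        unfolding f_def sn_def by (rule ext) simp
      ultimately show ?thesis using repW[OF Snz[OF z]] sums_unique2 by metis
    qed
    have dI: "W field_differentiable (at \<i>)"
    proof -
      have "sn field_differentiable (at \<i>)"
        by (rule holomorphic_on_imp_differentiable_at[OF snh]) auto
      moreover have "g field_differentiable (at \<i>)" using gd field_differentiable_def by blast
      ultimately have "(\<lambda>z. sn z * g z) field_differentiable (at \<i>)" by (rule field_differentiable_mult)
      then obtain D where "((\<lambda>z. sn z * g z) has_field_derivative D) (at \<i>)"
        unfolding field_differentiable_def by blast
      then have "(W has_field_derivative D) (at \<i>)"
        by (rule has_field_derivative_transform_within_open[OF _ oS iS]) (metis WS)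
      then show ?thesis unfolding field_differentiable_def by blast
    qed
    have Qh: "(\<lambda>z. (F z - C * sn z) / (\<i> - z)) holomorphic_on (UNIV - {\<i>})"
    proof -
      have hF: "F holomorphic_on (UNIV - {\<i>})" using eF unfolding entire_def by (rule holomorphic_on_subset) auto
      have hs: "sn holomorphic_on (UNIV - {\<i>})" using snh by (rule holomorphic_on_subset) auto
      show ?thesis by (intro holomorphic_intros hF hs) auto
    qed
    have dO: "W field_differentiable (at z)" if "z \<noteq> \<i>" for z
    proof -
      have "(\<lambda>z. (F z - C * sn z) / (\<i> - z)) field_differentiable (at z)"
        using holomorphic_on_imp_differentiable_at[OF Qh] that by auto
      then obtain D where "((\<lambda>z. (F z - C * sn z) / (\<i> - z)) has_field_derivative D) (at z)"
        unfolding field_differentiable_def by blast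
      then have "(W has_field_derivative D) (at z)"
        by (rule has_field_derivative_transform_within_open[of _ _ z "UNIV - {\<i>}"]) (use that in \<open>auto simp: W_def\<close>)
      then show ?thesis unfolding field_differentiable_def by blast
    qed
    have dA: "W field_differentiable (at z)" for z
    proof (cases "z = \<i>")
      case True then show ?thesis using dI by simp
    next
      case False then show ?thesis by (rule dO)
    qed
    show ?thesis unfolding entire_def
    proof (rule holomorphic_onI)
      fix x :: complex
      show "W field_differentiable (at x within UNIV)" using dA[of x] by simp
    qed
  qed
  have WPW: "W \<in> PW" by (rule GL[OF entW sd repW])
  have Fdec: "F z = \<i> * W z + z * (C * Sfun z - W z)" for z
  proof -
    have "F z = C * sn z + (\<i> - z) * W z"
    proof (cases "z = \<i>")
      case True then show ?thesis using sni unfolding C_def by simp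
    next
      case False
      then have "\<i> - z \<noteq> 0" by simp
      then show ?thesis unfolding W_def using False by (simp add: alg3)
    qed
    also have "C * sn z = z * (C * Sfun z)" unfolding sn_def using Sfun_prop[of z] by (simp add: mult.left_commute)
    finally show ?thesis by (simp add: algebra_simps)
  qed
  have "(\<lambda>z. \<i> * W z) \<in> PW" by (rule PW_cmult[OF WPW])
  moreover have "(\<lambda>z. C * Sfun z - W z) \<in> PW" by (rule PW_diff[OF PW_cmult[OF Sfun_PW] WPW])
  ultimately show ?thesis unfolding PW_plus_zPW_def F_def[symmetric] using Fdec by blast
qed


end
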